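(* Let $\phi=\{\phi_j\}$ be a sequence having strong limit values $\phi^*$. Then: (1) any two functions that are strong limit values of $\phi$ coincide $\mu$-a.e.; for every real constant $c$ the sequence $c\phi=\{c\phi_j\}$ has strong limit values $c\phi^*$; and for every $p>0$ the sequence $|\phi|^p=\{|\phi_j|^p\}$ has strong limit values $|\phi^*|^p$. (2) If moreover $\mu_j\to\mu$ weak-* regularly and $\psi=\{\psi_j\}\in\mathcal A(M)$ has strong limit values $\psi^*$, then $\phi+\psi=\{\phi_j+\psi_j\}$ has strong limit values $\phi^*+\psi^*$ and $\phi\psi=\{\phi_j\psi_j\}$ has strong limit values $\phi^*\psi^*$.
   Context: $K$ is a compact metric space and $M=\{\mu_j\}_{j\ge1}$ is a sequence of finite positive regular Borel measures on $K$ converging weak-* in $C(K)^*$ (i.e. $\int h\,d\mu_j\to\int h\,d\mu$ for all $h\in C(K)$) to a finite positive Borel measure $\mu$. Write $K_j=\operatorname{supp}\mu_j$ and $K_0=\operatorname{supp}\mu$. A "sequence" $\phi=\{\phi_j\}$ means a sequence of real-valued Borel functions $\phi_j$ on $K_j$. A sequence $\phi$ has weak limit values $\phi_*$ if $\phi_*$ is a $\mu$-integrable function on $K_0$ and $\int_{K_j}h\phi_j\,d\mu_j\to\int_{K_0}h\phi_*\,d\mu$ for every $h\in C(K)$; $\mathcal A(M)$ is the set of sequences having weak limit values. A sequence $\phi$ has strong limit values $\phi^*$ (a real-valued $\mu$-measurable function on $K_0$) if for all real $a<b$ and all $\varepsilon,\delta>0$ there are $j_0$ and an open set $O\subset K$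 containing $G(a,b)=\{x\in K_0:a\le\phi^*(x)<b\}$ such that $\mu_j(\{x\in K_j:\phi_j(x)<a-\varepsilon\}\cap O)+\mu_j(\{x\in K_j:\phi_j(x)>b+\varepsilon\}\cap O)<\delta$ for all $j\ge j_0$. The convergence $\mu_j\to\mu$ is called regular if for every $\mu$-measurable $A\subset K_0$ and $\varepsilon>0$ there are an open $O\supset A$ and $j_0$ with $\mu_j(O)<\mu(A)+\varepsilon$ for $j\ge j_0$. *)

theory Defs
  imports "HOL-Analysis.Analysis"
begin

definition msupp :: "'a::metric_space measure \<Rightarrow> 'a set" where
  "msupp N = {x. \<forall>U. open U \<and> x \<in> U \<longrightarrow> emeasure N U > 0}"

text \<open>Standing setting: finite Borel measures on the ambient type, concentrated on the
  compact set K, with mu_j converging weak-* to mu in C(K)*.\<close>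
definition weak_star_conv :: "'a::metric_space set \<Rightarrow> (nat \<Rightarrow> 'a measure) \<Rightarrow> 'a measure \<Rightarrow> bool" where
  "weak_star_conv K M mu \<longleftrightarrow>
     (\<forall>h::'a \<Rightarrow> real. continuous_on K h \<longrightarrow>
        (\<lambda>j. integral\<^sup>L (M j) h) \<longlonglongrightarrow> integral\<^sup>L mu h)"

definition is_seq :: "(nat \<Rightarrow> 'a::metric_space measure) \<Rightarrow> (nat \<Rightarrow> 'a \<Rightarrow> real) \<Rightarrow> bool" where
  "is_seq M phi \<longleftrightarrow> (\<forall>j. phi j \<in> borel_measurable (restrict_space (M j) (msupp (M j))))"

definition weak_lim :: "(nat \<Rightarrow> 'a::metric_space measure) \<Rightarrow> 'a measure \<Rightarrow> 'a set
    \<Rightarrow> (nat \<Rightarrow> 'a \<Rightarrow> real) \<Rightarrow> ('a \<Rightarrow> real) \<Rightarrow> bool" where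
  "weak_lim M mu K phi phil \<longleftrightarrow>
     set_integrable mu (msupp mu) phil \<and>
     (\<forall>j. set_integrable (M j) (msupp (M j)) (phi j)) \<and>
     (\<forall>h::'a \<Rightarrow> real. continuous_on K h \<longrightarrow>
        (\<lambda>j. LINT x:msupp (M j)|M j. h x * phi j x) \<longlonglongrightarrow> (LINT x:msupp mu|mu. h x * phil x))"

definition in_AM :: "(nat \<Rightarrow> 'a::metric_space measure) \<Rightarrow> 'a measure \<Rightarrow> 'a set
    \<Rightarrow> (nat \<Rightarrow> 'a \<Rightarrow> real) \<Rightarrow> bool" where
  "in_AM M mu K phi \<longleftrightarrow> (\<exists>phil. weak_lim M mu K phi phil)"

text \<open>Strong limit values.  Open sets are taken in the ambient space; since all
  sets involved lie in K this is equivalent to relative openness in K.\<close>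
definition strong_lim :: "(nat \<Rightarrow> 'a::metric_space measure) \<Rightarrow> 'a measure
    \<Rightarrow> (nat \<Rightarrow> 'a \<Rightarrow> real) \<Rightarrow> ('a \<Rightarrow> real) \<Rightarrow> bool" where
  "strong_lim M mu phi phis \<longleftrightarrow>
     phis \<in> borel_measurable (restrict_space (completion mu) (msupp mu)) \<and>
     (\<forall>a b \<epsilon> \<delta>. a < b \<and> \<epsilon> > 0 \<and> \<delta> > 0 \<longrightarrow>
        (\<exists>j0 U. open U \<and> {x \<in> msupp mu. a \<le> phis x \<and> phis x < b} \<subseteq> U \<and>
           (\<forall>j\<ge>j0. measure (M j) ({x \<in> msupp (M j). phi j x < a - \<epsilon>} \<inter> U)
                  + measure (M j) ({x \<in> msupp (M j). phi j x > b + \<epsilon>} \<inter> U) < \<delta>)))"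

text \<open>Regular convergence (mu-measurable = measurable for the completion of mu).\<close>
definition regular_conv :: "(nat \<Rightarrow> 'a::metric_space measure) \<Rightarrow> 'a measure \<Rightarrow> bool" where
  "regular_conv M mu \<longleftrightarrow>
     (\<forall>A \<epsilon>. A \<in> sets (completion mu) \<and> A \<subseteq> msupp mu \<and> \<epsilon> > 0 \<longrightarrow>
        (\<exists>U j0. open U \<and> A \<subseteq> U \<and>
           (\<forall>j\<ge>j0. measure (M j) U < measure (completion mu) A + \<epsilon>)))"

end

theory Submission
  imports Defs
begin


lemma msupp_closed: "closed (msupp N)"
proof -
  have "open (- msupp N)"
  proof (subst open_subopen, intro ballI)
    fix x assume "x \<in> - msupp N"
    then obtain U where U: "open U" "x \<in> U" "\<not> emeasure N U > 0" unfolding msupp_def by blast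
    have "U \<subseteq> - msupp N"
    proof
      fix y assume "y \<in> U"
      then show "y \<in> - msupp N" using U unfolding msupp_def by blast
    qed
    then show "\<exists>T. open T \<and> x \<in> T \<and> T \<subseteq> - msupp N" using U by blast
  qed
  then show ?thesis by (simp add: closed_def)
qed

lemma msupp_sets: "sets N = sets borel \<Longrightarrow> msupp N \<in> sets N"
  using borel_closed[OF msupp_closed[of N]] by simp

lemma space_borelN: "sets N = sets borel \<Longrightarrow> space N = UNIV"
  using sets_eq_imp_space_eq[of N borel] by simp

lemma seq_sets:
  assumes N: "sets N = sets borel"
    and f: "f \<in> borel_measurable (restrict_space N (msupp N))"
    and B: "B \<in> sets borel"
  shows "{x \<in> msupp N. f x \<in> B} \<in> sets N"
proof -
  have sp: "space N = UNIV" using space_borelN[OF N] .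
  have 1: "f -` B \<inter> space (restrict_space N (msupp N)) \<in> sets (restrict_space N (msupp N))"
    using measurable_sets[OF f B] .
  have 2: "msupp N \<inter> space N \<in> sets N" using msupp_sets[OF N] sp by simp
  have 3: "space (restrict_space N (msupp N)) = msupp N"
    using sp by (simp add: space_restrict_space)
  have "f -` B \<inter> msupp N \<in> sets N"
    using 1 sets_restrict_space_iff[OF 2] unfolding 3 by blast
  moreover have "{x \<in> msupp N. f x \<in> B} = f -` B \<inter> msupp N" by blast
  ultimately show ?thesis by simp
qed

lemma seq_less: fixes f :: "'a::metric_space \<Rightarrow> real" shows "sets N = sets borel \<Longrightarrow> f \<in> borel_measurable (restrict_space N (msupp N))
   \<Longrightarrow> {x \<in> msupp N. f x < c} \<in> sets N"
  using seq_sets[of N f "{..<c}", OF _ _ borel_open[OF open_lessThan]] by simp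

lemma seq_greater: fixes f :: "'a::metric_space \<Rightarrow> real" shows "sets N = sets borel \<Longrightarrow> f \<in> borel_measurable (restrict_space N (msupp N))
   \<Longrightarrow> {x \<in> msupp N. f x > c} \<in> sets N"
  using seq_sets[of N f "{c<..}", OF _ _ borel_open[OF open_greaterThan]] by simp

lemma supp_null:
  assumes K: "compact K" and N: "sets N = sets borel" and NK: "emeasure N (- K) = 0"
  shows "- msupp N \<in> null_sets N"
proof -
  define C where "C n = K \<inter> - (\<Union>y\<in>msupp N. ball y (1 / Suc n))" for n :: nat
  have Cnull: "C n \<in> null_sets N" for n
  proof -
    have cC: "compact (C n)" unfolding C_def
      by (intro closed_Int_compact[OF _ K] | rule compact_Int_closed[OF K]) (auto intro!: open_UN)
    let ?T = "{U. open U \<and> emeasure N U = 0}"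
    have cov: "C n \<subseteq> \<Union>?T"
    proof
      fix x assume x: "x \<in> C n"
      have "x \<notin> msupp N"
      proof
        assume "x \<in> msupp N"
        moreover have "x \<in> ball x (1 / Suc n)" by simp
        ultimately have "x \<in> (\<Union>y\<in>msupp N. ball y (1 / Suc n))" by blast
        then show False using x unfolding C_def by blast
      qed
      then obtain U where "open U" "x \<in> U" "\<not> emeasure N U > 0" unfolding msupp_def by blast
      then show "x \<in> \<Union>?T" by (auto simp: not_gr_zero)
    qed
    obtain T' where T': "T' \<subseteq> ?T" "finite T'" "C n \<subseteq> \<Union>T'"
      using compactE[OF cC cov] by blast
    have "\<Union>T' \<in> null_sets N"
    proof (rule null_sets.finite_Union[OF T'(2)])
      show "T' \<subseteq> null_sets N" using T'(1) N by (auto simp: null_sets_def)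
    qed
    moreover have "C n \<in> sets N" using compact_imp_closed[OF cC] N by simp
    ultimately show ?thesis using T'(3) null_sets_subset by blast
  qed
  have sub: "- msupp N \<subseteq> - K \<union> (\<Union>n. C n)"
  proof
    fix x assume x: "x \<in> - msupp N"
    show "x \<in> - K \<union> (\<Union>n. C n)"
    proof (cases "x \<in> K")
      case True
      obtain e where e: "e > 0" "ball x e \<inter> msupp N = {}"
        using x msupp_closed[of N] unfolding closed_def open_contains_ball by blast
      obtain n :: nat where n: "1 / Suc n < e"
        using e(1) by (metis nat_approx_posE)
      have "x \<in> C n"
        unfolding C_def using True
      proof (auto)
        fix y assume "y \<in> msupp N" "dist y x < 1 / (1 + real n)"
        then have "y \<in> ball x e" using n by (auto simp: dist_commute)
        then show False using e(2) \<open>y \<in> msupp N\<close> by blast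
      qed
      then show ?thesis by blast
    qed auto
  qed
  have "-K \<in> null_sets N"
    using NK N compact_imp_closed[OF K] by (auto simp: null_sets_def)
  then have "- K \<union> (\<Union>n. C n) \<in> null_sets N" using Cnull by auto
  moreover have "- msupp N \<in> sets N" using msupp_closed[of N] N by (simp add: borel_open)
  ultimately show ?thesis using sub null_sets_subset by blast
qed

lemma cont_int_le:
  fixes h :: "'a::metric_space \<Rightarrow> real"
  assumes N: "sets N = sets borel" and Nf: "finite_measure N"
    and h: "continuous_on UNIV h" and h0: "\<And>x. 0 \<le> h x" and h1: "\<And>x. h x \<le> indicator W x"
    and W: "open W"
  shows "integral\<^sup>L N h \<le> measure N W" and "integrable N h"
proof -
  have hm0: "h \<in> borel_measurable borel"
    using borel_measurable_continuous_onI[OF h] .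
  have hm: "h \<in> borel_measurable N"
    by (subst measurable_cong_sets[OF N refl]) (rule hm0)
  have "h x \<le> 1" for x using h1[of x] by (cases "x \<in> W") auto
  then have "norm (h x) \<le> 1" for x using h0[of x] by simp
  then have ae: "AE x in N. norm (h x) \<le> 1" by simp
  show ih: "integrable N h"
    by (rule finite_measure.integrable_const_bound[OF Nf ae hm])
  have im: "(indicator W :: 'a \<Rightarrow> real) \<in> borel_measurable N" using N W by (intro borel_measurable_indicator) simp
  have "norm (indicator W x :: real) \<le> 1" for x by (cases "x \<in> W") auto
  then have ae2: "AE x in N. norm (indicator W x :: real) \<le> 1" by simp
  have ii: "integrable N (indicator W :: 'a \<Rightarrow> real)"
    by (rule finite_measure.integrable_const_bound[OF Nf ae2 im])
  have "integral\<^sup>L N h \<le> integral\<^sup>L N (indicator W :: 'a \<Rightarrow> real)"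
    by (rule integral_mono[OF ih ii h1])
  also have "\<dots> = measure N W" using space_borelN[OF N] by simp
  finally show "integral\<^sup>L N h \<le> measure N W" .
qed


lemma open_le:
  fixes W :: "'a::metric_space set"
  assumes conv: "weak_star_conv K M mu"
    and M_borel: "\<And>j. sets (M j) = sets borel" and M_fin: "\<And>j. finite_measure (M j)"
    and mu_borel: "sets mu = sets borel" and mu_fin: "finite_measure mu"
    and W: "open W" and le: "\<And>j. j \<ge> j0 \<Longrightarrow> measure (M j) W \<le> r"
  shows "measure mu W \<le> r"
proof -
  have key: "integral\<^sup>L mu h \<le> r" if h: "continuous_on UNIV h" and h0: "\<And>x. 0 \<le> h x"
     and h1: "\<And>x. h x \<le> indicator W x" for h :: "'a \<Rightarrow> real"
  proof -
    have hK: "continuous_on K h" using h by (rule continuous_on_subset) simp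
    have lim: "(\<lambda>j. integral\<^sup>L (M j) h) \<longlonglongrightarrow> integral\<^sup>L mu h"
      using conv hK unfolding weak_star_conv_def by blast
    have "\<forall>j\<ge>j0. integral\<^sup>L (M j) h \<le> r"
    proof (intro allI impI)
      fix j assume j: "j0 \<le> j"
      have "integral\<^sup>L (M j) h \<le> measure (M j) W" by (rule cont_int_le(1)[OF M_borel M_fin h h0 h1 W])
      with le[OF j] show "integral\<^sup>L (M j) h \<le> r" by linarith
    qed
    then show ?thesis using LIMSEQ_le_const2[OF lim, of r] by blast
  qed
  show ?thesis
  proof (cases "W = UNIV")
    case True
    have "integral\<^sup>L mu (\<lambda>x. 1::real) \<le> r" by (rule key) (auto simp: True continuous_on_const)
    then show ?thesis using True finite_measure.emeasure_finite[OF mu_fin] space_borelN[OF mu_borel]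
      by simp
  next
    case False
    define h where "h n x = min 1 (real n * infdist x (- W))" for n :: nat and x
    have hc: "continuous_on UNIV (h n)" for n unfolding h_def
      by (intro continuous_intros continuous_on_infdist continuous_on_id)
    have h0: "0 \<le> h n x" for n x unfolding h_def by (simp add: infdist_nonneg)
    have h1: "h n x \<le> indicator W x" for n x
      unfolding h_def by (cases "x \<in> W") auto
    have hm: "h n \<in> borel_measurable mu" for n
      by (subst measurable_cong_sets[OF mu_borel refl]) (rule borel_measurable_continuous_onI[OF hc])
    have lim: "(\<lambda>n. h n x) \<longlonglongrightarrow> indicator W x" for x
    proof (cases "x \<in> W")
      case True
      have cl: "closed (- W)" using W by auto
      have d: "infdist x (- W) > 0"
        using infdist_pos_not_in_closed[OF cl] False True by auto
      obtain n0 :: nat where n0: "1 / infdist x (- W) < n0" using reals_Archimedean2 by blast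
      have "\<forall>\<^sub>F n in sequentially. h n x = 1"
        using eventually_ge_at_top[of n0]
      proof eventually_elim
        case (elim n)
        have "1 < real n0 * infdist x (- W)" using n0 d by (simp add: field_simps)
        also have "\<dots> \<le> real n * infdist x (- W)" using elim d by (intro mult_right_mono) auto
        finally show ?case unfolding h_def by simp
      qed
      then show ?thesis using True by (simp add: tendsto_eventually)
    next
      case False
      then show ?thesis unfolding h_def by simp
    qed
    have "(\<lambda>n. integral\<^sup>L mu (h n)) \<longlonglongrightarrow> integral\<^sup>L mu (indicator W :: 'a \<Rightarrow> real)"
    proof (rule integral_dominated_convergence[where w="\<lambda>x. 1"])
      show "(indicator W :: 'a \<Rightarrow> real) \<in> borel_measurable mu" using mu_borel W by (intro borel_measurable_indicator) simp
      show "integrable mu (\<lambda>x. 1::real)" using mu_fin by (simp add: finite_measure.integrable_const)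
      show "AE x in mu. (\<lambda>n. h n x) \<longlonglongrightarrow> indicator W x" using lim by simp
      have "h n x \<le> 1" for n x using h1[of n x] by (cases "x \<in> W") auto
      then have "norm (h n x) \<le> 1" for n x using h0[of n x] by simp
      then show "AE x in mu. norm (h n x) \<le> 1" for n by simp
    qed (rule hm)
    moreover have "\<forall>n\<ge>0. integral\<^sup>L mu (h n) \<le> r" using key[OF hc h0 h1] by blast
    ultimately have "integral\<^sup>L mu (indicator W :: 'a \<Rightarrow> real) \<le> r"
      using LIMSEQ_le_const2 by blast
    then show ?thesis using space_borelN[OF mu_borel] by simp
  qed
qed

lemma measure_supp_compl:
  assumes K: "compact K" and N: "sets N = sets borel" and NK: "emeasure N (- K) = 0"
  shows "measure N (- msupp N) = 0"
  using supp_null[OF K N NK] by (simp add: measure_def null_setsD1)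

lemma strong_limD:
  assumes "strong_lim M mu phi phis" "a < b" "\<epsilon> > 0" "\<delta> > 0"
  obtains j0 U where "open U" "{x \<in> msupp mu. a \<le> phis x \<and> phis x < b} \<subseteq> U"
    "\<And>j. j \<ge> j0 \<Longrightarrow> measure (M j) ({x \<in> msupp (M j). phi j x < a - \<epsilon>} \<inter> U)
                  + measure (M j) ({x \<in> msupp (M j). phi j x > b + \<epsilon>} \<inter> U) < \<delta>"
proof -
  have "\<forall>a b \<epsilon> \<delta>. a < b \<and> \<epsilon> > 0 \<and> \<delta> > 0 \<longrightarrow>
        (\<exists>j0 U. open U \<and> {x \<in> msupp mu. a \<le> phis x \<and> phis x < b} \<subseteq> U \<and>
           (\<forall>j\<ge>j0. measure (M j) ({x \<in> msupp (M j). phi j x < a - \<epsilon>} \<inter> U)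
                  + measure (M j) ({x \<in> msupp (M j). phi j x > b + \<epsilon>} \<inter> U) < \<delta>))"
    using assms(1) unfolding strong_lim_def by (rule conjunct2)
  then have "\<exists>j0 U. open U \<and> {x \<in> msupp mu. a \<le> phis x \<and> phis x < b} \<subseteq> U \<and>
           (\<forall>j\<ge>j0. measure (M j) ({x \<in> msupp (M j). phi j x < a - \<epsilon>} \<inter> U)
                  + measure (M j) ({x \<in> msupp (M j). phi j x > b + \<epsilon>} \<inter> U) < \<delta>)"
    using assms(2-4) by blast
  then obtain j0 U where "open U" "{x \<in> msupp mu. a \<le> phis x \<and> phis x < b} \<subseteq> U"
     "\<forall>j\<ge>j0. measure (M j) ({x \<in> msupp (M j). phi j x < a - \<epsilon>} \<inter> U)
                  + measure (M j) ({x \<in> msupp (M j). phi j x > b + \<epsilon>} \<inter> U) < \<delta>" by blast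
  then show thesis using that by blast
qed

lemma uniq_core:
  fixes K :: "'a::metric_space set"
  assumes K: "compact K"
    and M_borel: "\<And>j. sets (M j) = sets borel"
    and M_fin: "\<And>j. finite_measure (M j)"
    and M_K: "\<And>j. emeasure (M j) (- K) = 0"
    and mu_borel: "sets mu = sets borel"
    and mu_fin: "finite_measure mu"
    and conv: "weak_star_conv K M mu"
    and phi_seq: "is_seq M phi"
    and g: "strong_lim M mu phi g" and f: "strong_lim M mu phi f"
    and ab: "a < b" and bc: "b < c" and cd: "c < d" and dl: "\<delta> > 0"
  shows "emeasure (completion mu) {x \<in> msupp mu. a \<le> g x \<and> g x < b \<and> c \<le> f x \<and> f x < d}
     \<le> ennreal (2 * \<delta>)"
proof -
  define e where "e = (c - b) / 3"
  have e: "e > 0" using bc by (simp add: e_def)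
  obtain j1 U where U: "open U" "{x \<in> msupp mu. a \<le> g x \<and> g x < b} \<subseteq> U"
    "\<And>j. j \<ge> j1 \<Longrightarrow> measure (M j) ({x \<in> msupp (M j). phi j x < a - e} \<inter> U)
                  + measure (M j) ({x \<in> msupp (M j). phi j x > b + e} \<inter> U) < \<delta>"
    by (rule strong_limD[OF g ab e dl]) blast
  obtain j2 V where V: "open V" "{x \<in> msupp mu. c \<le> f x \<and> f x < d} \<subseteq> V"
    "\<And>j. j \<ge> j2 \<Longrightarrow> measure (M j) ({x \<in> msupp (M j). phi j x < c - e} \<inter> V)
                  + measure (M j) ({x \<in> msupp (M j). phi j x > d + e} \<inter> V) < \<delta>"
    by (rule strong_limD[OF f cd e dl]) blast
  have W: "open (U \<inter> V)" using U(1) V(1) by auto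
  have le: "measure (M j) (U \<inter> V) \<le> 2 * \<delta>" if j: "j \<ge> max j1 j2" for j
  proof -
    let ?A = "{x \<in> msupp (M j). phi j x > b + e} \<inter> U"
    let ?B = "{x \<in> msupp (M j). phi j x < c - e} \<inter> V"
    let ?C = "- msupp (M j)"
    have ms: "phi j \<in> borel_measurable (restrict_space (M j) (msupp (M j)))"
      using phi_seq unfolding is_seq_def by blast
    have Us: "U \<in> sets (M j)" using U(1) by (simp add: M_borel)
    have Vs: "V \<in> sets (M j)" using V(1) by (simp add: M_borel)
    have As: "?A \<in> sets (M j)" by (rule sets.Int[OF seq_greater[OF M_borel[of j] ms] Us])
    have Bs: "?B \<in> sets (M j)" by (rule sets.Int[OF seq_less[OF M_borel[of j] ms] Vs])
    have Cs: "?C \<in> sets (M j)" using sets.compl_sets[OF msupp_sets[OF M_borel[of j]]] space_borelN[OF M_borel[of j]] by (simp add: Compl_eq_Diff_UNIV)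
    have bce: "b + e < c - e" using bc unfolding e_def by (simp add: field_simps)
    have sub: "U \<inter> V \<subseteq> ?A \<union> ?B \<union> ?C"
    proof
      fix x assume x: "x \<in> U \<inter> V"
      show "x \<in> ?A \<union> ?B \<union> ?C"
      proof (cases "x \<in> msupp (M j)")
        case True
        then show ?thesis
        proof (cases "phi j x > b + e")
          case False
          then have "phi j x < c - e" using bce by linarith
          then show ?thesis using x True by blast
        qed (use x in blast)
      qed blast
    qed
    have m1: "measure (M j) (U \<inter> V) \<le> measure (M j) (?A \<union> ?B \<union> ?C)"
      by (rule finite_measure.finite_measure_mono[OF M_fin sub]) (intro sets.Un As Bs Cs)
    have m2: "measure (M j) (?A \<union> ?B \<union> ?C) \<le> measure (M j) (?A \<union> ?B) + measure (M j) ?C"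
      by (rule measure_Un_le) (intro sets.Un As Bs Cs)+
    have m3: "measure (M j) (?A \<union> ?B) \<le> measure (M j) ?A + measure (M j) ?B"
      by (rule measure_Un_le[OF As Bs])
    have mC: "measure (M j) ?C = 0" by (rule measure_supp_compl[OF K M_borel M_K])
    have u3: "measure (M j) ({x \<in> msupp (M j). phi j x < a - e} \<inter> U) + measure (M j) ?A < \<delta>"
      using U(3)[of j] j by simp
    have v3: "measure (M j) ?B + measure (M j) ({x \<in> msupp (M j). phi j x > d + e} \<inter> V) < \<delta>"
      using V(3)[of j] j by simp
    have n1: "measure (M j) ({x \<in> msupp (M j). phi j x < a - e} \<inter> U) \<ge> 0" by simp
    have n2: "measure (M j) ({x \<in> msupp (M j). phi j x > d + e} \<inter> V) \<ge> 0" by simp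
    show ?thesis using m1 m2 m3 mC u3 v3 n1 n2 by linarith
  qed
  have "measure mu (U \<inter> V) \<le> 2 * \<delta>"
    by (rule open_le[OF conv M_borel M_fin mu_borel mu_fin W le])
  have "emeasure (completion mu) {x \<in> msupp mu. a \<le> g x \<and> g x < b \<and> c \<le> f x \<and> f x < d}
      \<le> emeasure (completion mu) (U \<inter> V)"
  proof (rule emeasure_mono)
    show "{x \<in> msupp mu. a \<le> g x \<and> g x < b \<and> c \<le> f x \<and> f x < d} \<subseteq> U \<inter> V"
      using U(2) V(2) by blast
    have "U \<inter> V \<in> sets mu" using W by (simp add: mu_borel)
    then show "U \<inter> V \<in> sets (completion mu)" by simp
  qed
  also have "\<dots> = emeasure mu (U \<inter> V)" using W mu_borel by simp
  also have "\<dots> = ennreal (measure mu (U \<inter> V))" by (rule finite_measure.emeasure_eq_measure[OF mu_fin])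
  also have "\<dots> \<le> ennreal (2 * \<delta>)" using \<open>measure mu (U \<inter> V) \<le> 2 * \<delta>\<close> by (rule ennreal_leI)
  finally show ?thesis .
qed

lemma restr_sets:
  assumes sp: "space N = UNIV" and S: "S \<in> sets N"
    and f: "f \<in> borel_measurable (restrict_space N S)"
    and B: "B \<in> sets borel"
  shows "{x \<in> S. f x \<in> B} \<in> sets N"
proof -
  have 1: "f -` B \<inter> space (restrict_space N S) \<in> sets (restrict_space N S)"
    using measurable_sets[OF f B] .
  have 2: "S \<inter> space N \<in> sets N" using S sp by simp
  have 3: "space (restrict_space N S) = S"
    using sp by (simp add: space_restrict_space)
  have "f -` B \<inter> S \<in> sets N"
    using 1 sets_restrict_space_iff[OF 2] unfolding 3 by blast
  moreover have "{x \<in> S. f x \<in> B} = f -` B \<inter> S" by blast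
  ultimately show ?thesis by simp
qed

lemma uniq_half:
  fixes K :: "'a::metric_space set"
  assumes K: "compact K"
    and M_borel: "\<And>j. sets (M j) = sets borel"
    and M_fin: "\<And>j. finite_measure (M j)"
    and M_K: "\<And>j. emeasure (M j) (- K) = 0"
    and mu_borel: "sets mu = sets borel"
    and mu_fin: "finite_measure mu"
    and conv: "weak_star_conv K M mu"
    and phi_seq: "is_seq M phi"
    and g: "strong_lim M mu phi g" and f: "strong_lim M mu phi f"
  shows "AE x in mu. x \<in> msupp mu \<longrightarrow> \<not> g x < f x"
proof -
  let ?S = "msupp mu"
  let ?C = "completion mu"
  define A where "A t = (case t of (r1, r2, n) \<Rightarrow>
      {x \<in> ?S. r1 - real (Suc n) \<le> g x \<and> g x < r1 \<and> r2 \<le> f x \<and> f x < r2 + real (Suc n)})" for t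
  define T where "T = {(r1::real, r2::real, n::nat). r1 \<in> \<rat> \<and> r2 \<in> \<rat> \<and> r1 < r2}"
  have spC: "space ?C = UNIV" using space_borelN[OF mu_borel] by simp
  have SC: "?S \<in> sets ?C" using msupp_sets[OF mu_borel] by simp
  have gm: "g \<in> borel_measurable (restrict_space ?C ?S)" using g unfolding strong_lim_def by blast
  have fm: "f \<in> borel_measurable (restrict_space ?C ?S)" using f unfolding strong_lim_def by blast
  have cT: "countable T"
  proof -
    have "T \<subseteq> (\<rat>::real set) \<times> (\<rat>::real set) \<times> (UNIV :: nat set)" unfolding T_def by auto
    moreover have "countable ((\<rat>::real set) \<times> (\<rat>::real set) \<times> (UNIV :: nat set))"
      using countable_rat by (intro countable_SIGMA) auto
    ultimately show ?thesis by (rule countable_subset)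
  qed
  have null: "A t \<in> null_sets ?C" if t: "t \<in> T" for t
  proof -
    obtain r1 r2 n where tt: "t = (r1, r2, n)" by (cases t) auto
    have r12: "r1 < r2" using t unfolding tt T_def by auto
    have At: "A t = {x \<in> ?S. r1 - real (Suc n) \<le> g x \<and> g x < r1 \<and> r2 \<le> f x \<and> f x < r2 + real (Suc n)}"
      unfolding A_def tt by simp
    have s1: "{x \<in> ?S. g x \<in> {r1 - real (Suc n)..<r1}} \<in> sets ?C"
      by (rule restr_sets[OF spC SC gm]) simp
    have s2: "{x \<in> ?S. f x \<in> {r2..<r2 + real (Suc n)}} \<in> sets ?C"
      by (rule restr_sets[OF spC SC fm]) simp
    have "A t = {x \<in> ?S. g x \<in> {r1 - real (Suc n)..<r1}} \<inter> {x \<in> ?S. f x \<in> {r2..<r2 + real (Suc n)}}"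
      unfolding At by auto
    then have As: "A t \<in> sets ?C" using s1 s2 by simp
    have "emeasure ?C (A t) \<le> 0"
    proof (rule ennreal_le_epsilon)
      fix e :: real assume e: "e > 0"
      have "emeasure ?C (A t) \<le> ennreal (2 * (e / 2))"
        unfolding At
        by (rule uniq_core[OF K M_borel M_fin M_K mu_borel mu_fin conv phi_seq g f]) (use r12 e in auto)
      then show "emeasure ?C (A t) \<le> 0 + ennreal e" by simp
    qed
    then show ?thesis using As by (simp add: null_sets_def)
  qed
  have "AE x in ?C. \<forall>t\<in>T. x \<notin> A t"
    using cT null by (subst AE_ball_countable) (auto intro: AE_not_in)
  then have "AE x in ?C. x \<in> ?S \<longrightarrow> \<not> g x < f x"
  proof (rule AE_mp, intro AE_I2 impI notI)
    fix x assume H: "\<forall>t\<in>T. x \<notin> A t" and xS: "x \<in> ?S" and lt: "g x < f x"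
    obtain r1 where r1: "r1 \<in> \<rat>" "g x < r1" "r1 < f x" using Rats_dense_in_real[OF lt] by blast
    obtain r2 where r2: "r2 \<in> \<rat>" "r1 < r2" "r2 < f x" using Rats_dense_in_real[OF r1(3)] by blast
    obtain n :: nat where n: "max (r1 - g x) (f x - r2) < real n" using reals_Archimedean2 by blast
    have "(r1, r2, n) \<in> T" unfolding T_def using r1 r2 by auto
    moreover have "x \<in> A (r1, r2, n)" unfolding A_def using xS r1 r2 n by auto
    ultimately show False using H by blast
  qed
  then show ?thesis by (simp add: AE_completion_iff)
qed



lemma strong_limI:
  assumes "phis \<in> borel_measurable (restrict_space (completion mu) (msupp mu))"
    and "\<And>a b \<epsilon> \<delta>. a < b \<Longrightarrow> \<epsilon> > 0 \<Longrightarrow> \<delta> > 0 \<Longrightarrow>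
        (\<exists>j0 U. open U \<and> {x \<in> msupp mu. a \<le> phis x \<and> phis x < b} \<subseteq> U \<and>
           (\<forall>j\<ge>j0. measure (M j) ({x \<in> msupp (M j). phi j x < a - \<epsilon>} \<inter> U)
                  + measure (M j) ({x \<in> msupp (M j). phi j x > b + \<epsilon>} \<inter> U) < \<delta>))"
  shows "strong_lim M mu phi phis"
  unfolding strong_lim_def using assms by blast

lemma strong_lim_meas: "strong_lim M mu phi phis \<Longrightarrow> phis \<in> borel_measurable (restrict_space (completion mu) (msupp mu))"
  unfolding strong_lim_def by blast

lemma scale_pos:
  assumes phis: "strong_lim M mu phi phis" and c: "c > 0"
  shows "strong_lim M mu (\<lambda>j x. c * phi j x) (\<lambda>x. c * phis x)"
proof (rule strong_limI)
  show "(\<lambda>x. c * phis x) \<in> borel_measurable (restrict_space (completion mu) (msupp mu))"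
    using strong_lim_meas[OF phis] by measurable
next
  fix a b \<epsilon> \<delta> :: real assume ab: "a < b" and e: "\<epsilon> > 0" and d: "\<delta> > 0"
  have ab': "a / c < b / c" using ab c by (simp add: divide_strict_right_mono)
  have e': "\<epsilon> / c > 0" using e c by simp
  obtain j0 U where U: "open U" "{x \<in> msupp mu. a / c \<le> phis x \<and> phis x < b / c} \<subseteq> U"
    "\<And>j. j \<ge> j0 \<Longrightarrow> measure (M j) ({x \<in> msupp (M j). phi j x < a / c - \<epsilon> / c} \<inter> U)
                  + measure (M j) ({x \<in> msupp (M j). phi j x > b / c + \<epsilon> / c} \<inter> U) < \<delta>"
    by (rule strong_limD[OF phis ab' e' d]) blast
  have eq1: "(a \<le> c * y) = (a / c \<le> y)" for y using c by (simp add: field_simps)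
  have eq2: "(c * y < b) = (y < b / c)" for y using c by (simp add: field_simps)
  have eq3: "(c * y < a - \<epsilon>) = (y < a / c - \<epsilon> / c)" for y using c by (simp add: field_simps)
  have eq4: "(c * y > b + \<epsilon>) = (y > b / c + \<epsilon> / c)" for y using c by (simp add: field_simps)
  show "\<exists>j0 U. open U \<and> {x \<in> msupp mu. a \<le> c * phis x \<and> c * phis x < b} \<subseteq> U \<and>
           (\<forall>j\<ge>j0. measure (M j) ({x \<in> msupp (M j). c * phi j x < a - \<epsilon>} \<inter> U)
                  + measure (M j) ({x \<in> msupp (M j). c * phi j x > b + \<epsilon>} \<inter> U) < \<delta>)"
    unfolding eq1 eq2 eq3 eq4 using U by blast
qed

lemma bad_sets:
  assumes M_borel: "\<And>j. sets (M j) = sets borel" and phi_seq: "is_seq M phi" and U: "open U"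
  shows "{x \<in> msupp (M j). phi j x < c} \<inter> U \<in> sets (M j)"
    and "{x \<in> msupp (M j). phi j x > c} \<inter> U \<in> sets (M j)"
proof -
  have ms: "phi j \<in> borel_measurable (restrict_space (M j) (msupp (M j)))"
    using phi_seq unfolding is_seq_def by blast
  have Us: "U \<in> sets (M j)" using U by (simp add: M_borel)
  show "{x \<in> msupp (M j). phi j x < c} \<inter> U \<in> sets (M j)"
    by (rule sets.Int[OF seq_less[OF M_borel[of j] ms] Us])
  show "{x \<in> msupp (M j). phi j x > c} \<inter> U \<in> sets (M j)"
    by (rule sets.Int[OF seq_greater[OF M_borel[of j] ms] Us])
qed

lemma scale_neg:
  assumes M_borel: "\<And>j. sets (M j) = sets borel" and M_fin: "\<And>j. finite_measure (M j)"
    and phi_seq: "is_seq M phi"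
    and phis: "strong_lim M mu phi phis" and c: "c < 0"
  shows "strong_lim M mu (\<lambda>j x. c * phi j x) (\<lambda>x. c * phis x)"
proof (rule strong_limI)
  show "(\<lambda>x. c * phis x) \<in> borel_measurable (restrict_space (completion mu) (msupp mu))"
    using strong_lim_meas[OF phis] by measurable
next
  fix a b \<epsilon> \<delta> :: real assume ab: "a < b" and e: "\<epsilon> > 0" and d: "\<delta> > 0"
  define e' where "e' = - \<epsilon> / (2 * c)"
  have e': "e' > 0" using e c by (simp add: e'_def divide_pos_neg)
  have bac: "b / c < a / c" using ab c by (simp add: divide_strict_right_mono_neg)
  have ab': "b / c < a / c + e'" using bac e' by linarith
  obtain j0 U where U: "open U" "{x \<in> msupp mu. b / c \<le> phis x \<and> phis x < a / c + e'} \<subseteq> U"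
    "\<And>j. j \<ge> j0 \<Longrightarrow> measure (M j) ({x \<in> msupp (M j). phi j x < b / c - e'} \<inter> U)
                  + measure (M j) ({x \<in> msupp (M j). phi j x > a / c + e' + e'} \<inter> U) < \<delta>"
    by (rule strong_limD[OF phis ab' e' d]) blast
  have ce: "c * e' < 0" using c e' by (simp add: mult_neg_pos)
  have i1: "y < a / c + e'" if "a \<le> c * y" for y
  proof -
    have "a + c * e' < c * y" using ce that by linarith
    then show ?thesis using c by (simp add: field_simps)
  qed
  have i2: "c * y < b \<Longrightarrow> b / c \<le> y" for y using c by (simp add: field_simps)
  have ee: "a / c + e' + e' = (a - \<epsilon>) / c" unfolding e'_def using c by (simp add: field_simps)
  have eq3: "(c * y < a - \<epsilon>) = (y > a / c + e' + e')" for y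
    unfolding ee using c by (simp add: neg_divide_less_eq mult.commute)
  have i4: "c * y > b + \<epsilon> \<Longrightarrow> y < b / c - e'" for y
    using c e unfolding e'_def by (simp add: field_simps)
  have G: "{x \<in> msupp mu. a \<le> c * phis x \<and> c * phis x < b} \<subseteq> U"
    using U(2) i1 i2 by fastforce
  have "\<forall>j\<ge>j0. measure (M j) ({x \<in> msupp (M j). c * phi j x < a - \<epsilon>} \<inter> U)
                  + measure (M j) ({x \<in> msupp (M j). c * phi j x > b + \<epsilon>} \<inter> U) < \<delta>"
  proof (intro allI impI)
    fix j assume j: "j0 \<le> j"
    have s1: "{x \<in> msupp (M j). c * phi j x < a - \<epsilon>} \<inter> U = {x \<in> msupp (M j). phi j x > a / c + e' + e'} \<inter> U"
      unfolding eq3 ..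
    have s2: "measure (M j) ({x \<in> msupp (M j). c * phi j x > b + \<epsilon>} \<inter> U)
       \<le> measure (M j) ({x \<in> msupp (M j). phi j x < b / c - e'} \<inter> U)"
      by (rule finite_measure.finite_measure_mono[OF M_fin]) (use i4 bad_sets(1)[OF M_borel phi_seq U(1)] in auto)
    show "measure (M j) ({x \<in> msupp (M j). c * phi j x < a - \<epsilon>} \<inter> U)
                  + measure (M j) ({x \<in> msupp (M j). c * phi j x > b + \<epsilon>} \<inter> U) < \<delta>"
      using U(3)[OF j] s2 unfolding s1 by linarith
  qed
  then show "\<exists>j0 U. open U \<and> {x \<in> msupp mu. a \<le> c * phis x \<and> c * phis x < b} \<subseteq> U \<and>
           (\<forall>j\<ge>j0. measure (M j) ({x \<in> msupp (M j). c * phi j x < a - \<epsilon>} \<inter> U)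
                  + measure (M j) ({x \<in> msupp (M j). c * phi j x > b + \<epsilon>} \<inter> U) < \<delta>)"
    using U(1) G by blast
qed

lemma scale_zero:
  shows "strong_lim M mu (\<lambda>j x. 0 * phi j x) (\<lambda>x. 0 * phis x)"
proof (rule strong_limI)
  show "(\<lambda>x. 0 * phis x) \<in> borel_measurable (restrict_space (completion mu) (msupp mu))" by simp
next
  fix a b \<epsilon> \<delta> :: real assume ab: "a < b" and e: "\<epsilon> > 0" and d: "\<delta> > 0"
  show "\<exists>j0 U. open U \<and> {x \<in> msupp mu. a \<le> 0 * phis x \<and> 0 * phis x < b} \<subseteq> U \<and>
           (\<forall>j\<ge>j0. measure (M j) ({x \<in> msupp (M j). 0 * phi j x < a - \<epsilon>} \<inter> U)
                  + measure (M j) ({x \<in> msupp (M j). 0 * phi j x > b + \<epsilon>} \<inter> U) < \<delta>)"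
  proof (cases "a \<le> 0 \<and> 0 < b")
    case True
    show ?thesis
    proof (intro exI conjI allI impI)
      show "open UNIV" by simp
      show "{x \<in> msupp mu. a \<le> 0 * phis x \<and> 0 * phis x < b} \<subseteq> UNIV" by simp
      fix j :: nat
      have e1: "{x \<in> msupp (M j). 0 * phi j x < a - \<epsilon>} = {}" using True e by auto
      have e2: "{x \<in> msupp (M j). 0 * phi j x > b + \<epsilon>} = {}" using True e by auto
      show "measure (M j) ({x \<in> msupp (M j). 0 * phi j x < a - \<epsilon>} \<inter> UNIV)
                  + measure (M j) ({x \<in> msupp (M j). 0 * phi j x > b + \<epsilon>} \<inter> UNIV) < \<delta>"
        unfolding e1 e2 using d by simp
    qed
  next
    case False
    then have E: "{x \<in> msupp mu. a \<le> 0 * phis x \<and> 0 * phis x < b} = {}" by auto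
    show ?thesis
    proof (intro exI conjI allI impI)
      show "open {}" by simp
      show "{x \<in> msupp mu. a \<le> 0 * phis x \<and> 0 * phis x < b} \<subseteq> {}" using E by simp
      fix j :: nat
      show "measure (M j) ({x \<in> msupp (M j). 0 * phi j x < a - \<epsilon>} \<inter> {})
                  + measure (M j) ({x \<in> msupp (M j). 0 * phi j x > b + \<epsilon>} \<inter> {}) < \<delta>"
        using d by simp
    qed
  qed
qed

lemma scale_all:
  assumes M_borel: "\<And>j. sets (M j) = sets borel" and M_fin: "\<And>j. finite_measure (M j)"
    and phi_seq: "is_seq M phi"
    and phis: "strong_lim M mu phi phis"
  shows "strong_lim M mu (\<lambda>j x. c * phi j x) (\<lambda>x. c * phis x)"
proof -
  consider "c > 0" | "c = 0" | "c < 0" by linarith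
  then show ?thesis
  proof cases
    case 1 then show ?thesis by (rule scale_pos[OF phis])
  next
    case 2 then show ?thesis using scale_zero[of M mu phi phis] by simp
  next
    case 3 then show ?thesis by (rule scale_neg[OF M_borel M_fin phi_seq phis])
  qed
qed



lemma pw_less:
  fixes y z p :: real
  assumes p: "p > 0" and y: "y \<ge> 0" and z: "z \<ge> 0"
  shows "y powr p < z \<longleftrightarrow> y < z powr (1/p)"
proof
  assume "y powr p < z"
  then have "(y powr p) powr (1/p) < z powr (1/p)" using p by (intro powr_less_mono2) auto
  then show "y < z powr (1/p)" using p y by (simp add: powr_powr)
next
  assume "y < z powr (1/p)"
  then have "y powr p < (z powr (1/p)) powr p" using p y by (intro powr_less_mono2) auto
  then show "y powr p < z" using p z by (simp add: powr_powr)
qed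

lemma pw_gt:
  fixes y z p :: real
  assumes p: "p > 0" and y: "y \<ge> 0" and z: "z \<ge> 0"
  shows "z < y powr p \<longleftrightarrow> z powr (1/p) < y"
proof
  assume "z < y powr p"
  then have "z powr (1/p) < (y powr p) powr (1/p)" using p z by (intro powr_less_mono2) auto
  then show "z powr (1/p) < y" using p y by (simp add: powr_powr)
next
  assume "z powr (1/p) < y"
  then have "(z powr (1/p)) powr p < y powr p" using p by (intro powr_less_mono2) auto
  then show "z < y powr p" using p z by (simp add: powr_powr)
qed

lemma meas4:
  assumes "finite_measure N" "A \<subseteq> B1 \<union> B2 \<union> B3 \<union> B4"
    "B1 \<in> sets N" "B2 \<in> sets N" "B3 \<in> sets N" "B4 \<in> sets N"
  shows "measure N A \<le> measure N B1 + measure N B2 + measure N B3 + measure N B4"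
proof -
  have "measure N A \<le> measure N (B1 \<union> B2 \<union> B3 \<union> B4)"
    by (rule finite_measure.finite_measure_mono[OF assms(1,2)]) (intro sets.Un assms(3-6))
  also have "\<dots> \<le> measure N (B1 \<union> B2 \<union> B3) + measure N B4"
    by (rule measure_Un_le) (intro sets.Un assms(3-6))+
  also have "measure N (B1 \<union> B2 \<union> B3) \<le> measure N (B1 \<union> B2) + measure N B3"
    by (rule measure_Un_le) (intro sets.Un assms(3-6))+
  also have "measure N (B1 \<union> B2) \<le> measure N B1 + measure N B2"
    by (rule measure_Un_le) (intro sets.Un assms(3-6))+
  finally show ?thesis by simp
qed

lemma pow_lim:
  assumes M_borel: "\<And>j. sets (M j) = sets borel" and M_fin: "\<And>j. finite_measure (M j)"
    and phi_seq: "is_seq M phi"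
    and phis: "strong_lim M mu phi phis" and p: "p > 0"
  shows "strong_lim M mu (\<lambda>j x. \<bar>phi j x\<bar> powr p) (\<lambda>x. \<bar>phis x\<bar> powr p)"
proof (rule strong_limI)
  show "(\<lambda>x. \<bar>phis x\<bar> powr p) \<in> borel_measurable (restrict_space (completion mu) (msupp mu))"
    using strong_lim_meas[OF phis] by measurable
next
  fix a b \<epsilon> \<delta> :: real assume ab: "a < b" and e: "\<epsilon> > 0" and d: "\<delta> > 0"
  let ?G = "{x \<in> msupp mu. a \<le> \<bar>phis x\<bar> powr p \<and> \<bar>phis x\<bar> powr p < b}"
  show "\<exists>j0 U. open U \<and> ?G \<subseteq> U \<and>
           (\<forall>j\<ge>j0. measure (M j) ({x \<in> msupp (M j). \<bar>phi j x\<bar> powr p < a - \<epsilon>} \<inter> U)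
                  + measure (M j) ({x \<in> msupp (M j). \<bar>phi j x\<bar> powr p > b + \<epsilon>} \<inter> U) < \<delta>)"
  proof (cases "b > 0")
    case False
    then have E: "?G = {}" by (auto simp: not_less) (smt (verit) powr_ge_zero)
    show ?thesis
    proof (intro exI conjI allI impI)
      show "open {}" by simp
      show "?G \<subseteq> {}" using E by simp
      fix j :: nat
      show "measure (M j) ({x \<in> msupp (M j). \<bar>phi j x\<bar> powr p < a - \<epsilon>} \<inter> {})
                  + measure (M j) ({x \<in> msupp (M j). \<bar>phi j x\<bar> powr p > b + \<epsilon>} \<inter> {}) < \<delta>"
        using d by simp
    qed
  next
    case b: True
    define q where "q = 1 / p"
    have q: "q > 0" using p by (simp add: q_def)
    define \<alpha> where "\<alpha> = (if a > 0 then a powr q else 0)"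
    define \<beta> where "\<beta> = b powr q"
    have \<alpha>0: "\<alpha> \<ge> 0" unfolding \<alpha>_def by simp
    have \<beta>0: "\<beta> > 0" unfolding \<beta>_def using b by simp
    have \<alpha>\<beta>: "\<alpha> < \<beta>"
      unfolding \<alpha>_def \<beta>_def using ab b q by (auto intro: powr_less_mono2)
    have be: "(b + \<epsilon>) powr q > \<beta>" unfolding \<beta>_def using b e q by (intro powr_less_mono2) auto
    define e1 where "e1 = (if a - \<epsilon> > 0 then (\<alpha> - (a - \<epsilon>) powr q) / 2 else 1)"
    have e1: "e1 > 0"
    proof (cases "a - \<epsilon> > 0")
      case True
      then have "(a - \<epsilon>) powr q < a powr q" using e q by (intro powr_less_mono2) auto
      then show ?thesis unfolding e1_def \<alpha>_def using True e by auto
    qed (simp add: e1_def)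
    define e' where "e' = min e1 (min \<beta> ((b + \<epsilon>) powr q - \<beta>))"
    have e': "e' > 0" unfolding e'_def using e1 \<beta>0 be by auto
    have ee1: "e' \<le> e1" unfolding e'_def by simp
    have e'1: "(a - \<epsilon>) powr q \<le> \<alpha> - 2 * e'" if ae: "a - \<epsilon> > 0"
    proof -
      have h1: "2 * e1 = \<alpha> - (a - \<epsilon>) powr q" unfolding e1_def using ae by simp
      have h2: "2 * e' \<le> 2 * e1" using ee1 by simp
      show ?thesis using h1 h2 by simp
    qed
    have e'2: "\<beta> + e' \<le> (b + \<epsilon>) powr q" unfolding e'_def by auto
    have e'3: "e' \<le> \<beta>" unfolding e'_def by auto
    have d4: "\<delta> / 4 > 0" using d by simp
    have i1: "\<alpha> < \<beta>" by (rule \<alpha>\<beta>)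
    have i2: "- \<beta> < - \<alpha> + e'" using \<alpha>\<beta> e' by linarith
    obtain j1 U1 where U1: "open U1" "{x \<in> msupp mu. \<alpha> \<le> phis x \<and> phis x < \<beta>} \<subseteq> U1"
      "\<And>j. j \<ge> j1 \<Longrightarrow> measure (M j) ({x \<in> msupp (M j). phi j x < \<alpha> - e'} \<inter> U1)
                  + measure (M j) ({x \<in> msupp (M j). phi j x > \<beta> + e'} \<inter> U1) < \<delta> / 4"
      by (rule strong_limD[OF phis i1 e' d4]) blast
    obtain j2 U2 where U2: "open U2" "{x \<in> msupp mu. - \<beta> \<le> phis x \<and> phis x < - \<alpha> + e'} \<subseteq> U2"
      "\<And>j. j \<ge> j2 \<Longrightarrow> measure (M j) ({x \<in> msupp (M j). phi j x < - \<beta> - e'} \<inter> U2)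
                  + measure (M j) ({x \<in> msupp (M j). phi j x > - \<alpha> + e' + e'} \<inter> U2) < \<delta> / 4"
      by (rule strong_limD[OF phis i2 e' d4]) blast
    let ?U = "U1 \<union> U2"
    have oU: "open ?U" using U1(1) U2(1) by auto
    have GU: "?G \<subseteq> ?U"
    proof
      fix x assume x: "x \<in> ?G"
      let ?y = "phis x"
      have y0: "\<bar>?y\<bar> \<ge> 0" by simp
      have lt: "\<bar>?y\<bar> < \<beta>" using x pw_less[OF p y0, of b] b unfolding \<beta>_def q_def by auto
      have ge: "\<alpha> \<le> \<bar>?y\<bar>"
      proof (cases "a > 0")
        case True
        then have "\<not> \<bar>?y\<bar> powr p < a" using x by auto
        then have "\<not> \<bar>?y\<bar> < a powr q" using pw_less[OF p y0, of a] True unfolding q_def by auto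
        then show ?thesis unfolding \<alpha>_def using True by simp
      qed (simp add: \<alpha>_def)
      show "x \<in> ?U"
      proof (cases "?y \<ge> 0")
        case True
        then have "x \<in> {x \<in> msupp mu. \<alpha> \<le> phis x \<and> phis x < \<beta>}" using x lt ge by auto
        then show ?thesis using U1(2) by blast
      next
        case False
        then have "x \<in> {x \<in> msupp mu. - \<beta> \<le> phis x \<and> phis x < - \<alpha> + e'}" using x lt ge e' by auto
        then show ?thesis using U2(2) by blast
      qed
    qed
    have bound: "measure (M j) ({x \<in> msupp (M j). \<bar>phi j x\<bar> powr p < a - \<epsilon>} \<inter> ?U)
                  + measure (M j) ({x \<in> msupp (M j). \<bar>phi j x\<bar> powr p > b + \<epsilon>} \<inter> ?U) < \<delta>"
      if j: "j \<ge> max j1 j2" for j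
    proof -
      let ?L1 = "{x \<in> msupp (M j). phi j x < \<alpha> - e'} \<inter> U1"
      let ?H1 = "{x \<in> msupp (M j). phi j x > \<beta> + e'} \<inter> U1"
      let ?L2 = "{x \<in> msupp (M j). phi j x < - \<beta> - e'} \<inter> U2"
      let ?H2 = "{x \<in> msupp (M j). phi j x > - \<alpha> + e' + e'} \<inter> U2"
      have s: "?L1 \<in> sets (M j)" "?H1 \<in> sets (M j)" "?L2 \<in> sets (M j)" "?H2 \<in> sets (M j)"
        using bad_sets[OF M_borel phi_seq U1(1)] bad_sets[OF M_borel phi_seq U2(1)] by auto
      have sub1: "{x \<in> msupp (M j). \<bar>phi j x\<bar> powr p < a - \<epsilon>} \<inter> ?U \<subseteq> ?L1 \<union> ?H1 \<union> ?L2 \<union> ?H2"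
      proof
        fix x assume x: "x \<in> {x \<in> msupp (M j). \<bar>phi j x\<bar> powr p < a - \<epsilon>} \<inter> ?U"
        let ?y = "phi j x"
        have y0: "\<bar>?y\<bar> \<ge> 0" by simp
        have lt: "\<bar>?y\<bar> powr p < a - \<epsilon>" using x by auto
        have ae: "a - \<epsilon> > 0" using lt powr_ge_zero[of "\<bar>?y\<bar>" p] by linarith
        have "\<bar>?y\<bar> < (a - \<epsilon>) powr q" using lt pw_less[OF p y0, of "a - \<epsilon>"] ae unfolding q_def by auto
        then have "\<bar>?y\<bar> < \<alpha> - 2 * e'" using e'1[OF ae] by linarith
        then have "?y < \<alpha> - e'" "?y > - \<alpha> + e' + e'" using e' by auto
        then show "x \<in> ?L1 \<union> ?H1 \<union> ?L2 \<union> ?H2" using x by auto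
      qed
      have sub2: "{x \<in> msupp (M j). \<bar>phi j x\<bar> powr p > b + \<epsilon>} \<inter> ?U \<subseteq> ?L1 \<union> ?H1 \<union> ?L2 \<union> ?H2"
      proof
        fix x assume x: "x \<in> {x \<in> msupp (M j). \<bar>phi j x\<bar> powr p > b + \<epsilon>} \<inter> ?U"
        let ?y = "phi j x"
        have y0: "\<bar>?y\<bar> \<ge> 0" by simp
        have gt: "\<bar>?y\<bar> powr p > b + \<epsilon>" using x by auto
        have "\<bar>?y\<bar> > (b + \<epsilon>) powr q" using gt pw_gt[OF p y0, of "b + \<epsilon>"] b e unfolding q_def by auto
        then have gy: "\<bar>?y\<bar> > \<beta> + e'" using e'2 by linarith
        show "x \<in> ?L1 \<union> ?H1 \<union> ?L2 \<union> ?H2"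
        proof (cases "?y \<ge> 0")
          case True
          then have "?y > \<beta> + e'" "?y > - \<alpha> + e' + e'" using gy e'3 \<alpha>0 by auto
          then show ?thesis using x by auto
        next
          case False
          then have "?y < - \<beta> - e'" "?y < \<alpha> - e'" using gy \<alpha>0 \<beta>0 by auto
          then show ?thesis using x by auto
        qed
      qed
      have m1: "measure (M j) ({x \<in> msupp (M j). \<bar>phi j x\<bar> powr p < a - \<epsilon>} \<inter> ?U)
          \<le> measure (M j) ?L1 + measure (M j) ?H1 + measure (M j) ?L2 + measure (M j) ?H2"
        by (rule meas4[OF M_fin sub1 s])
      have m2: "measure (M j) ({x \<in> msupp (M j). \<bar>phi j x\<bar> powr p > b + \<epsilon>} \<inter> ?U)
          \<le> measure (M j) ?L1 + measure (M j) ?H1 + measure (M j) ?L2 + measure (M j) ?H2"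
        by (rule meas4[OF M_fin sub2 s])
      have "measure (M j) ?L1 + measure (M j) ?H1 < \<delta> / 4" using U1(3)[of j] j by simp
      moreover have "measure (M j) ?L2 + measure (M j) ?H2 < \<delta> / 4" using U2(3)[of j] j by simp
      ultimately show ?thesis using m1 m2 by linarith
    qed
    show ?thesis using oU GU bound by blast
  qed
qed



lemma cell_lemma:
  fixes F :: "real \<Rightarrow> real \<Rightarrow> real"
  assumes M_borel: "\<And>j. sets (M j) = sets borel" and M_fin: "\<And>j. finite_measure (M j)"
    and phi_seq: "is_seq M phi" and psi_seq: "is_seq M psi"
    and phis: "strong_lim M mu phi phis" and psis: "strong_lim M mu psi psis"
    and h: "h > 0" and e: "\<epsilon> > 0" and d: "\<delta> > 0"
    and UC: "\<And>y z y' z'. \<bar>y\<bar> < N \<Longrightarrow> \<bar>z\<bar> < N \<Longrightarrow> \<bar>y' - y\<bar> \<le> 2 * h \<Longrightarrow> \<bar>z' - z\<bar> \<le> 2 * h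
        \<Longrightarrow> \<bar>F y' z' - F y z\<bar> < \<epsilon>"
  shows "\<exists>j0 U. open U \<and>
     {x \<in> msupp mu. a \<le> F (phis x) (psis x) \<and> F (phis x) (psis x) < b \<and> \<bar>phis x\<bar> < N \<and> \<bar>psis x\<bar> < N
        \<and> s \<le> phis x \<and> phis x < s + h \<and> t \<le> psis x \<and> psis x < t + h} \<subseteq> U \<and>
     (\<forall>j\<ge>j0. \<exists>B\<in>sets (M j). measure (M j) B \<le> \<delta> \<and>
         {x \<in> msupp (M j). F (phi j x) (psi j x) < a - \<epsilon>} \<inter> U \<subseteq> B \<and>
         {x \<in> msupp (M j). F (phi j x) (psi j x) > b + \<epsilon>} \<inter> U \<subseteq> B)"
    (is "\<exists>j0 U. open U \<and> ?Gc \<subseteq> U \<and> _")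
proof (cases "?Gc = {}")
  case True
  show ?thesis
  proof (intro exI[of _ 0] exI[of _ "{}"] conjI allI impI)
    fix j :: nat
    show "\<exists>B\<in>sets (M j). measure (M j) B \<le> \<delta> \<and>
         {x \<in> msupp (M j). F (phi j x) (psi j x) < a - \<epsilon>} \<inter> {} \<subseteq> B \<and>
         {x \<in> msupp (M j). F (phi j x) (psi j x) > b + \<epsilon>} \<inter> {} \<subseteq> B"
      using d by (intro bexI[of _ "{}"]) auto
  qed (use True in auto)
next
  case False
  then obtain x0 where x0: "x0 \<in> ?Gc" by blast
  define y0 where "y0 = phis x0"
  define z0 where "z0 = psis x0"
  have y0: "\<bar>y0\<bar> < N" "s \<le> y0" "y0 < s + h" using x0 unfolding y0_def by auto
  have z0: "\<bar>z0\<bar> < N" "t \<le> z0" "z0 < t + h" using x0 unfolding z0_def by auto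
  have F0: "a \<le> F y0 z0" "F y0 z0 < b" using x0 unfolding y0_def z0_def by auto
  have sh: "s < s + h" "t < t + h" using h by auto
  have d2: "\<delta> / 2 > 0" using d by simp
  obtain j1 U1 where U1: "open U1" "{x \<in> msupp mu. s \<le> phis x \<and> phis x < s + h} \<subseteq> U1"
    "\<And>j. j \<ge> j1 \<Longrightarrow> measure (M j) ({x \<in> msupp (M j). phi j x < s - h} \<inter> U1)
                  + measure (M j) ({x \<in> msupp (M j). phi j x > s + h + h} \<inter> U1) < \<delta> / 2"
    by (rule strong_limD[OF phis sh(1) h d2]) blast
  obtain j2 U2 where U2: "open U2" "{x \<in> msupp mu. t \<le> psis x \<and> psis x < t + h} \<subseteq> U2"
    "\<And>j. j \<ge> j2 \<Longrightarrow> measure (M j) ({x \<in> msupp (M j). psi j x < t - h} \<inter> U2)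
                  + measure (M j) ({x \<in> msupp (M j). psi j x > t + h + h} \<inter> U2) < \<delta> / 2"
    by (rule strong_limD[OF psis sh(2) h d2]) blast
  show ?thesis
  proof (intro exI[of _ "max j1 j2"] exI[of _ "U1 \<inter> U2"] conjI allI impI)
    show "open (U1 \<inter> U2)" using U1(1) U2(1) by auto
    show "?Gc \<subseteq> U1 \<inter> U2" using U1(2) U2(2) by blast
    fix j assume j: "max j1 j2 \<le> j"
    let ?L1 = "{x \<in> msupp (M j). phi j x < s - h} \<inter> U1"
    let ?H1 = "{x \<in> msupp (M j). phi j x > s + h + h} \<inter> U1"
    let ?L2 = "{x \<in> msupp (M j). psi j x < t - h} \<inter> U2"
    let ?H2 = "{x \<in> msupp (M j). psi j x > t + h + h} \<inter> U2"
    let ?B = "?L1 \<union> ?H1 \<union> ?L2 \<union> ?H2"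
    have s1: "?L1 \<in> sets (M j)" "?H1 \<in> sets (M j)"
      using bad_sets[OF M_borel phi_seq U1(1)] by auto
    have s2: "?L2 \<in> sets (M j)" "?H2 \<in> sets (M j)"
      using bad_sets[OF M_borel psi_seq U2(1)] by auto
    have Bs: "?B \<in> sets (M j)" using s1 s2 by (intro sets.Un)
    have "measure (M j) ?B \<le> measure (M j) ?L1 + measure (M j) ?H1 + measure (M j) ?L2 + measure (M j) ?H2"
      by (rule meas4[OF M_fin _ s1 s2]) (rule order_refl)
    moreover have "measure (M j) ?L1 + measure (M j) ?H1 < \<delta> / 2" using U1(3)[of j] j by simp
    moreover have "measure (M j) ?L2 + measure (M j) ?H2 < \<delta> / 2" using U2(3)[of j] j by simp
    ultimately have mB: "measure (M j) ?B \<le> \<delta>" by linarith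
    have near: "a - \<epsilon> < F (phi j x) (psi j x) \<and> F (phi j x) (psi j x) < b + \<epsilon>"
      if x: "x \<in> msupp (M j)" "x \<in> U1 \<inter> U2" "x \<notin> ?B" for x
    proof -
      have p1: "s - h \<le> phi j x" "phi j x \<le> s + h + h" using x by auto
      have p2: "t - h \<le> psi j x" "psi j x \<le> t + h + h" using x by auto
      have "\<bar>phi j x - y0\<bar> \<le> 2 * h" using p1 y0 by linarith
      moreover have "\<bar>psi j x - z0\<bar> \<le> 2 * h" using p2 z0 by linarith
      ultimately have "\<bar>F (phi j x) (psi j x) - F y0 z0\<bar> < \<epsilon>" using UC y0(1) z0(1) by blast
      then show ?thesis using F0 by linarith
    qed
    show "\<exists>B\<in>sets (M j). measure (M j) B \<le> \<delta> \<and>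
         {x \<in> msupp (M j). F (phi j x) (psi j x) < a - \<epsilon>} \<inter> (U1 \<inter> U2) \<subseteq> B \<and>
         {x \<in> msupp (M j). F (phi j x) (psi j x) > b + \<epsilon>} \<inter> (U1 \<inter> U2) \<subseteq> B"
    proof (intro bexI[OF _ Bs] conjI mB)
      show "{x \<in> msupp (M j). F (phi j x) (psi j x) < a - \<epsilon>} \<inter> (U1 \<inter> U2) \<subseteq> ?B"
        using near by force
      show "{x \<in> msupp (M j). F (phi j x) (psi j x) > b + \<epsilon>} \<inter> (U1 \<inter> U2) \<subseteq> ?B"
        using near by force
    qed
  qed
qed



lemma tail_small:
  fixes f g :: "'a \<Rightarrow> real"
  assumes C: "finite_measure C" and sp: "space C = UNIV" and S: "S \<in> sets C"
    and f: "f \<in> borel_measurable (restrict_space C S)" and g: "g \<in> borel_measurable (restrict_space C S)"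
    and r: "r > 0"
  shows "\<exists>N::nat. N > 0 \<and> measure C ({x \<in> S. real N \<le> \<bar>f x\<bar>} \<union> {x \<in> S. real N \<le> \<bar>g x\<bar>}) < r"
proof -
  define T where "T n = {x \<in> S. real n \<le> \<bar>f x\<bar>} \<union> {x \<in> S. real n \<le> \<bar>g x\<bar>}" for n :: nat
  have Ts: "T n \<in> sets C" for n
  proof -
    have cl: "{y :: real. real n \<le> \<bar>y\<bar>} \<in> sets borel"
      by (rule borel_closed) (intro closed_Collect_le continuous_intros)
    have "{x \<in> S. f x \<in> {y. real n \<le> \<bar>y\<bar>}} \<in> sets C" by (rule restr_sets[OF sp S f cl])
    moreover have "{x \<in> S. g x \<in> {y. real n \<le> \<bar>y\<bar>}} \<in> sets C" by (rule restr_sets[OF sp S g cl])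
    ultimately show ?thesis unfolding T_def by auto
  qed
  have dec: "decseq T" unfolding T_def decseq_def by auto
  have int: "(\<Inter>n. T n) = {}"
  proof (rule ccontr)
    assume "(\<Inter>n. T n) \<noteq> {}"
    then obtain x where x: "\<And>n. x \<in> T n" by blast
    obtain n :: nat where n: "\<bar>f x\<bar> + \<bar>g x\<bar> < real n" using reals_Archimedean2 by blast
    have "x \<in> T n" by (rule x)
    then show False using n unfolding T_def by auto
  qed
  have "(\<lambda>n. measure C (T n)) \<longlonglongrightarrow> measure C (\<Inter>n. T n)"
    by (rule finite_measure.finite_Lim_measure_decseq[OF C]) (use Ts dec in auto)
  then have "(\<lambda>n. measure C (T n)) \<longlonglongrightarrow> 0" unfolding int by simp
  then have "\<forall>\<^sub>F n in sequentially. measure C (T n) < r" using r by (rule order_tendstoD(2))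
  then obtain n0 where n0: "\<And>n. n \<ge> n0 \<Longrightarrow> measure C (T n) < r" unfolding eventually_sequentially by blast
  show ?thesis using n0[of "Suc n0"] unfolding T_def by (intro exI[of _ "Suc n0"]) auto
qed

lemma completion_finite: "finite_measure mu \<Longrightarrow> finite_measure (completion mu)"
  by (rule finite_measureI) (simp add: finite_measure.emeasure_finite)

lemma comb_lim:
  fixes F :: "real \<Rightarrow> real \<Rightarrow> real"
  assumes M_borel: "\<And>j. sets (M j) = sets borel" and M_fin: "\<And>j. finite_measure (M j)"
    and mu_borel: "sets mu = sets borel" and mu_fin: "finite_measure mu"
    and reg: "regular_conv M mu"
    and phi_seq: "is_seq M phi" and psi_seq: "is_seq M psi"
    and phis: "strong_lim M mu phi phis" and psis: "strong_lim M mu psi psis"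
    and Fm: "(\<lambda>x. F (phis x) (psis x)) \<in> borel_measurable (restrict_space (completion mu) (msupp mu))"
    and UC: "\<And>N \<eta>. N > 0 \<Longrightarrow> \<eta> > 0 \<Longrightarrow> \<exists>h>0. \<forall>y z y' z'. \<bar>y\<bar> < N \<longrightarrow> \<bar>z\<bar> < N \<longrightarrow>
               \<bar>y' - y\<bar> \<le> h \<longrightarrow> \<bar>z' - z\<bar> \<le> h \<longrightarrow> \<bar>F y' z' - F y z\<bar> < \<eta>"
  shows "strong_lim M mu (\<lambda>j x. F (phi j x) (psi j x)) (\<lambda>x. F (phis x) (psis x))"
proof (rule strong_limI[OF Fm])
  fix a b \<epsilon> \<delta> :: real assume ab: "a < b" and e: "\<epsilon> > 0" and d: "\<delta> > 0"
  let ?C = "completion mu"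
  let ?S = "msupp mu"
  let ?G = "{x \<in> ?S. a \<le> F (phis x) (psis x) \<and> F (phis x) (psis x) < b}"
  have Cfin: "finite_measure ?C" by (rule completion_finite[OF mu_fin])
  have spC: "space ?C = UNIV" using space_borelN[OF mu_borel] by simp
  have SC: "?S \<in> sets ?C" using msupp_sets[OF mu_borel] by simp
  have phm: "phis \<in> borel_measurable (restrict_space ?C ?S)" by (rule strong_lim_meas[OF phis])
  have psm: "psis \<in> borel_measurable (restrict_space ?C ?S)" by (rule strong_lim_meas[OF psis])
  have d8: "\<delta> / 8 > 0" using d by simp
  obtain N :: nat where N: "N > 0"
    and TN: "measure ?C ({x \<in> ?S. real N \<le> \<bar>phis x\<bar>} \<union> {x \<in> ?S. real N \<le> \<bar>psis x\<bar>}) < \<delta> / 8"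
    using tail_small[OF Cfin spC SC phm psm d8] by blast
  let ?T = "{x \<in> ?S. real N \<le> \<bar>phis x\<bar>} \<union> {x \<in> ?S. real N \<le> \<bar>psis x\<bar>}"
  have Ts: "?T \<in> sets ?C"
  proof -
    have cl: "{y :: real. real N \<le> \<bar>y\<bar>} \<in> sets borel"
      by (rule borel_closed) (intro closed_Collect_le continuous_intros)
    have "{x \<in> ?S. phis x \<in> {y. real N \<le> \<bar>y\<bar>}} \<in> sets ?C" by (rule restr_sets[OF spC SC phm cl])
    moreover have "{x \<in> ?S. psis x \<in> {y. real N \<le> \<bar>y\<bar>}} \<in> sets ?C" by (rule restr_sets[OF spC SC psm cl])
    ultimately show ?thesis by auto
  qed
  have Npos: "real N > 0" using N by simp
  obtain h0 where h0: "h0 > 0" and UC0: "\<forall>y z y' z'. \<bar>y\<bar> < real N \<longrightarrow> \<bar>z\<bar> < real N \<longrightarrow>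
               \<bar>y' - y\<bar> \<le> h0 \<longrightarrow> \<bar>z' - z\<bar> \<le> h0 \<longrightarrow> \<bar>F y' z' - F y z\<bar> < \<epsilon>"
    using UC[OF Npos e] by blast
  define h where "h = h0 / 2"
  have h: "h > 0" using h0 by (simp add: h_def)
  have UC2: "\<bar>F y' z' - F y z\<bar> < \<epsilon>"
    if "\<bar>y\<bar> < real N" "\<bar>z\<bar> < real N" "\<bar>y' - y\<bar> \<le> 2 * h" "\<bar>z' - z\<bar> \<le> 2 * h" for y z y' z'
    using UC0 that unfolding h_def by auto
  define mi where "mi = \<lceil>real N / h\<rceil>"
  define I0 where "I0 = {-mi..mi} \<times> {-mi..mi}"
  have fI0: "finite I0" unfolding I0_def by simp
  define dd where "dd = \<delta> / (4 * (real (card I0) + 1))"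
  have dd: "dd > 0" using d by (simp add: dd_def)
  have cdd: "real (card I0) * dd < \<delta> / 4"
  proof -
    have "real (card I0) * dd = \<delta> / 4 * (real (card I0) / (real (card I0) + 1))"
      unfolding dd_def by (simp add: field_simps)
    also have "\<dots> < \<delta> / 4 * 1" using d by (intro mult_strict_left_mono) auto
    finally show ?thesis by simp
  qed
  let ?Gc = "\<lambda>c. {x \<in> ?S. a \<le> F (phis x) (psis x) \<and> F (phis x) (psis x) < b \<and> \<bar>phis x\<bar> < real N \<and> \<bar>psis x\<bar> < real N
        \<and> real_of_int (fst c) * h \<le> phis x \<and> phis x < real_of_int (fst c) * h + h
        \<and> real_of_int (snd c) * h \<le> psis x \<and> psis x < real_of_int (snd c) * h + h}"
  let ?P = "\<lambda>c j0 U. open U \<and> ?Gc c \<subseteq> U \<and>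
     (\<forall>j\<ge>j0. \<exists>B\<in>sets (M j). measure (M j) B \<le> dd \<and>
         {x \<in> msupp (M j). F (phi j x) (psi j x) < a - \<epsilon>} \<inter> U \<subseteq> B \<and>
         {x \<in> msupp (M j). F (phi j x) (psi j x) > b + \<epsilon>} \<inter> U \<subseteq> B)"
  have cells: "\<forall>c\<in>I0. \<exists>p. ?P c (fst p) (snd p)"
  proof
    fix c assume "c \<in> I0"
    have "\<exists>j0 U. ?P c j0 U"
      by (rule cell_lemma[OF M_borel M_fin phi_seq psi_seq phis psis h e dd UC2])
    then show "\<exists>p. ?P c (fst p) (snd p)" by auto
  qed
  define pf where "pf c = (SOME p. ?P c (fst p) (snd p))" for c
  have pf: "\<forall>c\<in>I0. ?P c (fst (pf c)) (snd (pf c))"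
  proof
    fix c assume c: "c \<in> I0"
    have "\<exists>p. ?P c (fst p) (snd p)" using cells c by (rule bspec)
    then show "?P c (fst (pf c)) (snd (pf c))" unfolding pf_def by (rule someI_ex)
  qed
  define R where "R = ?G \<inter> ?T"
  have Gs: "?G \<in> sets ?C"
  proof -
    have "{x \<in> ?S. F (phis x) (psis x) \<in> {a..<b}} \<in> sets ?C" by (rule restr_sets[OF spC SC Fm]) simp
    then show ?thesis by simp
  qed
  have Rs: "R \<in> sets ?C" unfolding R_def using Gs Ts by auto
  have RS: "R \<subseteq> ?S" unfolding R_def by auto
  have mR: "measure ?C R < \<delta> / 8"
  proof -
    have "measure ?C R \<le> measure ?C ?T"
      by (rule finite_measure.finite_measure_mono[OF Cfin _ Ts]) (auto simp: R_def)
    then show ?thesis using TN by linarith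
  qed
  have "\<exists>U j0. open U \<and> R \<subseteq> U \<and> (\<forall>j\<ge>j0. measure (M j) U < measure ?C R + \<delta> / 8)"
    by (rule reg[unfolded regular_conv_def, rule_format]) (use Rs RS d8 in auto)
  then obtain Ob jR where Ob: "open Ob" "R \<subseteq> Ob" "\<forall>j\<ge>jR. measure (M j) Ob < measure ?C R + \<delta> / 8"
    by blast
  define U where "U = (\<Union>c\<in>I0. snd (pf c)) \<union> Ob"
  define J where "J = Max (insert jR ((\<lambda>c. fst (pf c)) ` I0))"
  have oU: "open U" unfolding U_def using pf Ob(1) by auto
  have GU: "?G \<subseteq> U"
  proof
    fix x assume x: "x \<in> ?G"
    show "x \<in> U"
    proof (cases "\<bar>phis x\<bar> < real N \<and> \<bar>psis x\<bar> < real N")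
      case False
      then have "x \<in> R" using x unfolding R_def by auto
      then show ?thesis using Ob(2) unfolding U_def by blast
    next
      case True
      define k where "k = \<lfloor>phis x / h\<rfloor>"
      define l where "l = \<lfloor>psis x / h\<rfloor>"
      have Nh: "real N / h \<le> real_of_int mi" unfolding mi_def by simp
      have fk: "real_of_int k \<le> phis x / h" "phis x / h < real_of_int k + 1"
        unfolding k_def using floor_correct[of "phis x / h"] by auto
      have fl: "real_of_int l \<le> psis x / h" "psis x / h < real_of_int l + 1"
        unfolding l_def using floor_correct[of "psis x / h"] by auto
      have b1: "- (real N / h) < phis x / h" "phis x / h < real N / h"
               "- (real N / h) < psis x / h" "psis x / h < real N / h"
        using True h by (auto simp: divide_strict_right_mono field_simps)
      have "real_of_int k < real_of_int (mi + 1)" "real_of_int (- mi - 1) < real_of_int k"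
        using fk b1 Nh by auto
      then have "k < mi + 1" "- mi - 1 < k" by (simp only: of_int_less_iff)+
      then have k: "-mi \<le> k" "k \<le> mi" by linarith+
      have "real_of_int l < real_of_int (mi + 1)" "real_of_int (- mi - 1) < real_of_int l"
        using fl b1 Nh by auto
      then have "l < mi + 1" "- mi - 1 < l" by (simp only: of_int_less_iff)+
      then have l: "-mi \<le> l" "l \<le> mi" by linarith+
      have cI: "(k, l) \<in> I0" unfolding I0_def using k l by auto
      have "real_of_int k * h \<le> phis x" "phis x < real_of_int k * h + h"
        using fk h by (auto simp: field_simps)
      moreover have "real_of_int l * h \<le> psis x" "psis x < real_of_int l * h + h"
        using fl h by (auto simp: field_simps)
      ultimately have "x \<in> ?Gc (k, l)" using x True by auto
      then have "x \<in> snd (pf (k, l))" using pf cI by blast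
      then show ?thesis unfolding U_def using cI by blast
    qed
  qed
  have bound: "measure (M j) ({x \<in> msupp (M j). F (phi j x) (psi j x) < a - \<epsilon>} \<inter> U)
                  + measure (M j) ({x \<in> msupp (M j). F (phi j x) (psi j x) > b + \<epsilon>} \<inter> U) < \<delta>"
    if j: "j \<ge> J" for j
  proof -
    have fin: "finite (insert jR ((\<lambda>c. fst (pf c)) ` I0))" using fI0 by simp
    have jR: "j \<ge> jR" using j Max_ge[OF fin, of jR] unfolding J_def by auto
    have jc: "j \<ge> fst (pf c)" if "c \<in> I0" for c
      using j Max_ge[OF fin, of "fst (pf c)"] that unfolding J_def by auto
    let ?Q = "\<lambda>c B. B \<in> sets (M j) \<and> measure (M j) B \<le> dd \<and>
         {x \<in> msupp (M j). F (phi j x) (psi j x) < a - \<epsilon>} \<inter> snd (pf c) \<subseteq> B \<and>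
         {x \<in> msupp (M j). F (phi j x) (psi j x) > b + \<epsilon>} \<inter> snd (pf c) \<subseteq> B"
    have "\<forall>c\<in>I0. \<exists>B. B \<in> sets (M j) \<and> measure (M j) B \<le> dd \<and>
         {x \<in> msupp (M j). F (phi j x) (psi j x) < a - \<epsilon>} \<inter> snd (pf c) \<subseteq> B \<and>
         {x \<in> msupp (M j). F (phi j x) (psi j x) > b + \<epsilon>} \<inter> snd (pf c) \<subseteq> B"
    proof
      fix c assume c: "c \<in> I0"
      have "\<forall>j'\<ge>fst (pf c). \<exists>B\<in>sets (M j'). measure (M j') B \<le> dd \<and>
         {x \<in> msupp (M j'). F (phi j' x) (psi j' x) < a - \<epsilon>} \<inter> snd (pf c) \<subseteq> B \<and>
         {x \<in> msupp (M j'). F (phi j' x) (psi j' x) > b + \<epsilon>} \<inter> snd (pf c) \<subseteq> B"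
        using pf c by blast
      then show "\<exists>B. B \<in> sets (M j) \<and> measure (M j) B \<le> dd \<and>
         {x \<in> msupp (M j). F (phi j x) (psi j x) < a - \<epsilon>} \<inter> snd (pf c) \<subseteq> B \<and>
         {x \<in> msupp (M j). F (phi j x) (psi j x) > b + \<epsilon>} \<inter> snd (pf c) \<subseteq> B"
        using jc[OF c] by blast
    qed
    then have ex: "\<forall>c\<in>I0. \<exists>B. ?Q c B" .
    define Bf where "Bf c = (SOME B. ?Q c B)" for c
    have Bf: "\<forall>c\<in>I0. ?Q c (Bf c)"
    proof
      fix c assume c: "c \<in> I0"
      have "\<exists>B. ?Q c B" using ex c by (rule bspec)
      then show "?Q c (Bf c)" unfolding Bf_def by (rule someI_ex)
    qed
    have Bf: "\<forall>c\<in>I0. Bf c \<in> sets (M j) \<and> measure (M j) (Bf c) \<le> dd \<and>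
         {x \<in> msupp (M j). F (phi j x) (psi j x) < a - \<epsilon>} \<inter> snd (pf c) \<subseteq> Bf c \<and>
         {x \<in> msupp (M j). F (phi j x) (psi j x) > b + \<epsilon>} \<inter> snd (pf c) \<subseteq> Bf c"
      using Bf .
    have Os: "Ob \<in> sets (M j)" using Ob(1) by (simp add: M_borel)
    have UBs: "(\<Union>c\<in>I0. Bf c) \<in> sets (M j)" using Bf fI0 by (intro sets.finite_UN) auto
    have mUB: "measure (M j) (\<Union>c\<in>I0. Bf c) \<le> real (card I0) * dd"
    proof -
      have "measure (M j) (\<Union>c\<in>I0. Bf c) \<le> (\<Sum>c\<in>I0. measure (M j) (Bf c))"
        using Bf by (intro finite_measure.finite_measure_subadditive_finite[OF M_fin fI0]) auto
      also have "\<dots> \<le> real (card I0) * dd" using Bf by (intro sum_bounded_above) auto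
      finally show ?thesis .
    qed
    have mO: "measure (M j) Ob < \<delta> / 4" using Ob(3) jR mR by auto
    have key: "measure (M j) (A \<inter> U) < \<delta> / 2"
      if A: "\<And>c. c \<in> I0 \<Longrightarrow> A \<inter> snd (pf c) \<subseteq> Bf c" for A
    proof -
      have sub: "A \<inter> U \<subseteq> (\<Union>c\<in>I0. Bf c) \<union> Ob" unfolding U_def using A by blast
      have "measure (M j) (A \<inter> U) \<le> measure (M j) ((\<Union>c\<in>I0. Bf c) \<union> Ob)"
        by (rule finite_measure.finite_measure_mono[OF M_fin sub]) (use UBs Os in auto)
      also have "\<dots> \<le> measure (M j) (\<Union>c\<in>I0. Bf c) + measure (M j) Ob"
        by (rule measure_Un_le[OF UBs Os])
      finally show ?thesis using mUB mO cdd by linarith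
    qed
    have k1: "measure (M j) ({x \<in> msupp (M j). F (phi j x) (psi j x) < a - \<epsilon>} \<inter> U) < \<delta> / 2"
      by (rule key) (use Bf in blast)
    have k2: "measure (M j) ({x \<in> msupp (M j). F (phi j x) (psi j x) > b + \<epsilon>} \<inter> U) < \<delta> / 2"
      by (rule key) (use Bf in blast)
    show ?thesis using k1 k2 by linarith
  qed
  show "\<exists>j0 U. open U \<and> ?G \<subseteq> U \<and>
           (\<forall>j\<ge>j0. measure (M j) ({x \<in> msupp (M j). F (phi j x) (psi j x) < a - \<epsilon>} \<inter> U)
                  + measure (M j) ({x \<in> msupp (M j). F (phi j x) (psi j x) > b + \<epsilon>} \<inter> U) < \<delta>)"
    using oU GU bound by blast
qed



lemma sum_lim:
  assumes M_borel: "\<And>j. sets (M j) = sets borel" and M_fin: "\<And>j. finite_measure (M j)"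
    and mu_borel: "sets mu = sets borel" and mu_fin: "finite_measure mu"
    and reg: "regular_conv M mu"
    and phi_seq: "is_seq M phi" and psi_seq: "is_seq M psi"
    and phis: "strong_lim M mu phi phis" and psis: "strong_lim M mu psi psis"
  shows "strong_lim M mu (\<lambda>j x. phi j x + psi j x) (\<lambda>x. phis x + psis x)"
proof (rule comb_lim[where F="\<lambda>y z. y + z", OF M_borel M_fin mu_borel mu_fin reg phi_seq psi_seq phis psis])
  show "(\<lambda>x. phis x + psis x) \<in> borel_measurable (restrict_space (completion mu) (msupp mu))"
    using strong_lim_meas[OF phis] strong_lim_meas[OF psis] by measurable
next
  fix N \<eta> :: real assume N: "N > 0" and eta: "\<eta> > 0"
  show "\<exists>h>0. \<forall>y z y' z'. \<bar>y\<bar> < N \<longrightarrow> \<bar>z\<bar> < N \<longrightarrow>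
               \<bar>y' - y\<bar> \<le> h \<longrightarrow> \<bar>z' - z\<bar> \<le> h \<longrightarrow> \<bar>(y' + z') - (y + z)\<bar> < \<eta>"
  proof (intro exI[of _ "\<eta> / 3"] conjI allI impI)
    show "\<eta> / 3 > 0" using eta by simp
    fix y z y' z' :: real assume "\<bar>y' - y\<bar> \<le> \<eta> / 3" "\<bar>z' - z\<bar> \<le> \<eta> / 3"
    then show "\<bar>(y' + z') - (y + z)\<bar> < \<eta>" using eta by linarith
  qed
qed

lemma prod_lim:
  assumes M_borel: "\<And>j. sets (M j) = sets borel" and M_fin: "\<And>j. finite_measure (M j)"
    and mu_borel: "sets mu = sets borel" and mu_fin: "finite_measure mu"
    and reg: "regular_conv M mu"
    and phi_seq: "is_seq M phi" and psi_seq: "is_seq M psi"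
    and phis: "strong_lim M mu phi phis" and psis: "strong_lim M mu psi psis"
  shows "strong_lim M mu (\<lambda>j x. phi j x * psi j x) (\<lambda>x. phis x * psis x)"
proof (rule comb_lim[where F="\<lambda>y z. y * z", OF M_borel M_fin mu_borel mu_fin reg phi_seq psi_seq phis psis])
  show "(\<lambda>x. phis x * psis x) \<in> borel_measurable (restrict_space (completion mu) (msupp mu))"
    using strong_lim_meas[OF phis] strong_lim_meas[OF psis] by measurable
next
  fix N \<eta> :: real assume N: "N > 0" and eta: "\<eta> > 0"
  define h where "h = min 1 (\<eta> / (2 * N + 2))"
  have h: "h > 0" unfolding h_def using N eta by simp
  have h1: "h \<le> 1" unfolding h_def by simp
  have h2: "h * (2 * N + 2) \<le> \<eta>" unfolding h_def using N eta
    by (smt (verit, ccfv_SIG) divide_pos_pos min.cobounded2 pos_le_divide_eq)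
  show "\<exists>h>0. \<forall>y z y' z'. \<bar>y\<bar> < N \<longrightarrow> \<bar>z\<bar> < N \<longrightarrow>
               \<bar>y' - y\<bar> \<le> h \<longrightarrow> \<bar>z' - z\<bar> \<le> h \<longrightarrow> \<bar>y' * z' - y * z\<bar> < \<eta>"
  proof (intro exI[of _ h] conjI allI impI)
    show "h > 0" by (rule h)
    fix y z y' z' :: real assume y: "\<bar>y\<bar> < N" and z: "\<bar>z\<bar> < N" and dy: "\<bar>y' - y\<bar> \<le> h" and dz: "\<bar>z' - z\<bar> \<le> h"
    have z': "\<bar>z'\<bar> \<le> N + 1" using z dz h1 by linarith
    have eq: "y' * z' - y * z = (y' - y) * z' + y * (z' - z)" by (simp add: algebra_simps)
    have "\<bar>(y' - y) * z'\<bar> \<le> h * (N + 1)"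
      unfolding abs_mult using dy z' by (intro mult_mono) auto
    moreover have "\<bar>y * (z' - z)\<bar> \<le> N * h"
      unfolding abs_mult using y dz h by (intro mult_mono) auto
    moreover have "N * h < h * (N + 1)" using h by (simp add: algebra_simps)
    ultimately have "\<bar>y' * z' - y * z\<bar> < h * (2 * N + 2)"
      unfolding eq using abs_triangle_ineq[of "(y' - y) * z'" "y * (z' - z)"] by (simp add: algebra_simps)
    then show "\<bar>y' * z' - y * z\<bar> < \<eta>" using h2 by linarith
  qed
qed


theorem theorem3p3:
  fixes K :: "'a::metric_space set"
    and M :: "nat \<Rightarrow> 'a measure" and mu :: "'a measure"
    and phi :: "nat \<Rightarrow> 'a \<Rightarrow> real" and phis :: "'a \<Rightarrow> real"
  assumes K: "compact K"
    and M_borel: "\<And>j. sets (M j) = sets borel"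
    and M_fin: "\<And>j. finite_measure (M j)"
    and M_K: "\<And>j. emeasure (M j) (- K) = 0"
    and mu_borel: "sets mu = sets borel"
    and mu_fin: "finite_measure mu"
    and mu_K: "emeasure mu (- K) = 0"
    and conv: "weak_star_conv K M mu"
    and phi_seq: "is_seq M phi"
    and phi_strong: "strong_lim M mu phi phis"
  shows
    "(\<forall>g. strong_lim M mu phi g \<longrightarrow> (AE x in mu. x \<in> msupp mu \<longrightarrow> g x = phis x))
     \<and> (\<forall>c::real. strong_lim M mu (\<lambda>j x. c * phi j x) (\<lambda>x. c * phis x))
     \<and> (\<forall>p::real. p > 0 \<longrightarrow>
          strong_lim M mu (\<lambda>j x. \<bar>phi j x\<bar> powr p) (\<lambda>x. \<bar>phis x\<bar> powr p))
     \<and> (\<forall>psi psis. regular_conv M mu \<and> is_seq M psi \<and> in_AM M mu K psi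
          \<and> strong_lim M mu psi psis \<longrightarrow>
          strong_lim M mu (\<lambda>j x. phi j x + psi j x) (\<lambda>x. phis x + psis x)
          \<and> strong_lim M mu (\<lambda>j x. phi j x * psi j x) (\<lambda>x. phis x * psis x))"
proof (intro conjI allI impI)
  fix g assume g: "strong_lim M mu phi g"
  have h1: "AE x in mu. x \<in> msupp mu \<longrightarrow> \<not> g x < phis x"
    by (rule uniq_half[OF K M_borel M_fin M_K mu_borel mu_fin conv phi_seq g phi_strong])
  have h2: "AE x in mu. x \<in> msupp mu \<longrightarrow> \<not> phis x < g x"
    by (rule uniq_half[OF K M_borel M_fin M_K mu_borel mu_fin conv phi_seq phi_strong g])
  show "AE x in mu. x \<in> msupp mu \<longrightarrow> g x = phis x"
    using h1 h2 by eventually_elim auto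
next
  fix c :: real
  show "strong_lim M mu (\<lambda>j x. c * phi j x) (\<lambda>x. c * phis x)"
    by (rule scale_all[OF M_borel M_fin phi_seq phi_strong])
next
  fix p :: real assume "p > 0"
  then show "strong_lim M mu (\<lambda>j x. \<bar>phi j x\<bar> powr p) (\<lambda>x. \<bar>phis x\<bar> powr p)"
    by (rule pow_lim[OF M_borel M_fin phi_seq phi_strong])
next
  fix psi psis
  assume H: "regular_conv M mu \<and> is_seq M psi \<and> in_AM M mu K psi \<and> strong_lim M mu psi psis"
  then have reg: "regular_conv M mu" and psi_seq: "is_seq M psi" and psis: "strong_lim M mu psi psis"
    by auto
  show "strong_lim M mu (\<lambda>j x. phi j x + psi j x) (\<lambda>x. phis x + psis x)"
    by (rule sum_lim[OF M_borel M_fin mu_borel mu_fin reg phi_seq psi_seq phi_strong psis])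
  show "strong_lim M mu (\<lambda>j x. phi j x * psi j x) (\<lambda>x. phis x * psis x)"
    by (rule prod_lim[OF M_borel M_fin mu_borel mu_fin reg phi_seq psi_seq phi_strong psis])
qed

end
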